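(* Consider the Markov process described in the context with $K=1$, satisfying Assumption (A) and the ergodicity condition (E). Then for every $x\in\{-1,1\}^c$ the equation $(\mathrm E_x)$ has exactly one root $\beta_0\in(0,1)$; in total this gives $2^c$ roots (one for each $x$).
   Context: Fix integers $c\ge 1$ and $K\ge1$ (in the claim $K=1$). Consider an irreducible continuous-time Markov process on $V\cup W$, where $V$ is finite and $W=\{\mathbf n=(n_0,\dots,n_c): n_0\in\{0,1,\dots\},\ n_i\in\{0,1\}\}$. For each $i\in\{1,\dots,c\}$ and integer $k\le K$ there are nonnegative rates $a_{k,i},b_{k,i},c_{k,i},d_{k,i}$. From $\mathbf n\in W$, for each $i$ and $k\in\{-n_0,\dots,K\}$, the process jumps (changing only coordinates $0$ and $i$) from $(n_0,n_i)=(n_0,0)$ to $(n_0+k,1)$ at rate $a_{k,i}$ and to $(n_0+k,0)$ at rate $b_{k,i}$, and from $(n_0,1)$ to $(n_0+k,1)$ at rate $c_{k,i}$ and to $(n_0+k,0)$ at rate $d_{k,i}$; from $\mathbf n$ it jumps into $V$ with total rate $\sum_i\sum_{k\le -n_0-1}((1-n_i)(a_{k,i}+b_{k,i})+n_i(c_{k,i}+d_{k,i}))$; no other transitions leave $W$, and from $V$ no transitions go to states with $n_0\ge K$. Let $A_i(z)=\sum_{k=-\infty}^K a_{k,i}z^{K-k}$ and similarly $B_i,C_i,D_i$ with $b,c,d$. Assumption (A): for each $i$: (i) $A_i(1),B_i(1),C_i(1),D_i(1)<\infty$; (ii) $A_i(1),D_i(1)>0$; (iii) $A_i'(1),B_i'(1),C_i'(1),D_i'(1)<\infty$;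 (iv) $a_{K,i}=0$ or $d_{K,i}=0$; (v) $b_{K,i}=c_{K,i}\ne0$. Ergodicity condition (E): $0<\sum_{i=1}^c\frac{1}{A_i(1)+D_i(1)}\bigl(D_i(1)(A_i'(1)-KA_i(1)+B_i'(1)-KB_i(1))+A_i(1)(C_i'(1)-KC_i(1)+D_i'(1)-KD_i(1))\bigr)$. Let $F_i(z)=z^K(A_i(1)+B_i(1)-C_i(1)-D_i(1))-B_i(z)+C_i(z)$. For real $\beta_0\in[0,1]$ let $R_i(\beta_0)=\sqrt{F_i(\beta_0)^2+4A_i(\beta_0)D_i(\beta_0)}$ (nonnegative square root). For $x\in\{-1,1\}^c$, equation $(\mathrm E_x)$ in the unknown $\beta_0$ is \[0=\sum_{i=1}^c\Bigl(x_iR_i(\beta_0)+B_i(\beta_0)+C_i(\beta_0)-\beta_0^K\bigl(A_i(1)+B_i(1)+C_i(1)+D_i(1)\bigr)\Bigr).\] *)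

theory Defs
  imports "HOL-Analysis.Analysis"
begin

text \<open>Rates are given as functions \<open>r :: nat \<Rightarrow> int \<Rightarrow> real\<close>, \<open>r i k\<close> being the
  rate with index \<open>i\<close> and jump \<open>k \<le> K\<close>. With \<open>K = 1\<close> the generating function is
  \<open>\<Sum>_{k\<le>1} r i k z^(1-k) = \<Sum>_m r i (1-m) z^m\<close>.\<close>

definition gf1 :: "(nat \<Rightarrow> int \<Rightarrow> real) \<Rightarrow> nat \<Rightarrow> real \<Rightarrow> real" where
  "gf1 r i z = (\<Sum>m. r i (1 - int m) * z ^ m)"

definition gf1_deriv_at1 :: "(nat \<Rightarrow> int \<Rightarrow> real) \<Rightarrow> nat \<Rightarrow> real" where
  "gf1_deriv_at1 r i = (\<Sum>m. real m * r i (1 - int m))"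

definition assumption_A :: "nat \<Rightarrow> (nat \<Rightarrow> int \<Rightarrow> real) \<Rightarrow> (nat \<Rightarrow> int \<Rightarrow> real)
    \<Rightarrow> (nat \<Rightarrow> int \<Rightarrow> real) \<Rightarrow> (nat \<Rightarrow> int \<Rightarrow> real) \<Rightarrow> bool" where
  "assumption_A c a b cc d \<longleftrightarrow>
     (\<forall>i\<in>{1..c}.
        (\<forall>r\<in>{a, b, cc, d}. \<forall>k\<le>1. 0 \<le> r i k) \<and>
        (\<forall>r\<in>{a, b, cc, d}. summable (\<lambda>m. r i (1 - int m))) \<and>
        gf1 a i 1 > 0 \<and> gf1 d i 1 > 0 \<and>
        (\<forall>r\<in>{a, b, cc, d}. summable (\<lambda>m. real m * r i (1 - int m))) \<and>
        (a i 1 = 0 \<or> d i 1 = 0) \<and>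
        b i 1 = cc i 1 \<and> b i 1 \<noteq> 0)"

definition ergodicity_E :: "nat \<Rightarrow> (nat \<Rightarrow> int \<Rightarrow> real) \<Rightarrow> (nat \<Rightarrow> int \<Rightarrow> real)
    \<Rightarrow> (nat \<Rightarrow> int \<Rightarrow> real) \<Rightarrow> (nat \<Rightarrow> int \<Rightarrow> real) \<Rightarrow> bool" where
  "ergodicity_E c a b cc d \<longleftrightarrow>
     0 < (\<Sum>i=1..c. 1 / (gf1 a i 1 + gf1 d i 1) *
        (gf1 d i 1 * (gf1_deriv_at1 a i - gf1 a i 1 + gf1_deriv_at1 b i - gf1 b i 1)
         + gf1 a i 1 * (gf1_deriv_at1 cc i - gf1 cc i 1 + gf1_deriv_at1 d i - gf1 d i 1)))"

definition F1 :: "(nat \<Rightarrow> int \<Rightarrow> real) \<Rightarrow> (nat \<Rightarrow> int \<Rightarrow> real)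
    \<Rightarrow> (nat \<Rightarrow> int \<Rightarrow> real) \<Rightarrow> (nat \<Rightarrow> int \<Rightarrow> real) \<Rightarrow> nat \<Rightarrow> real \<Rightarrow> real" where
  "F1 a b cc d i z = z * (gf1 a i 1 + gf1 b i 1 - gf1 cc i 1 - gf1 d i 1) - gf1 b i z + gf1 cc i z"

definition R1 :: "(nat \<Rightarrow> int \<Rightarrow> real) \<Rightarrow> (nat \<Rightarrow> int \<Rightarrow> real)
    \<Rightarrow> (nat \<Rightarrow> int \<Rightarrow> real) \<Rightarrow> (nat \<Rightarrow> int \<Rightarrow> real) \<Rightarrow> nat \<Rightarrow> real \<Rightarrow> real" where
  "R1 a b cc d i z = sqrt ((F1 a b cc d i z)\<^sup>2 + 4 * gf1 a i z * gf1 d i z)"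

definition eq_Ex :: "nat \<Rightarrow> (nat \<Rightarrow> int \<Rightarrow> real) \<Rightarrow> (nat \<Rightarrow> int \<Rightarrow> real)
    \<Rightarrow> (nat \<Rightarrow> int \<Rightarrow> real) \<Rightarrow> (nat \<Rightarrow> int \<Rightarrow> real) \<Rightarrow> (nat \<Rightarrow> real) \<Rightarrow> real \<Rightarrow> bool" where
  "eq_Ex c a b cc d x \<beta> \<longleftrightarrow>
     0 = (\<Sum>i=1..c. x i * R1 a b cc d i \<beta> + gf1 b i \<beta> + gf1 cc i \<beta>
            - \<beta> * (gf1 a i 1 + gf1 b i 1 + gf1 cc i 1 + gf1 d i 1))"

end

theory Submission
  imports Defs
begin
definition ps :: "(nat \<Rightarrow> real) \<Rightarrow> real \<Rightarrow> real" where
  "ps f x = (\<Sum>m. f m * x ^ m)"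

lemma ps_summable:
  fixes f :: "nat \<Rightarrow> real"
  assumes "\<And>m. 0 \<le> f m" "summable f" "0 \<le> x" "x \<le> 1"
  shows "summable (\<lambda>m. f m * x ^ m)"
proof (rule summable_comparison_test'[OF assms(2)])
  fix m :: nat assume "m \<ge> 0"
  have "x ^ m \<le> 1" using assms by (simp add: power_le_one)
  then show "norm (f m * x ^ m) \<le> f m"
    using assms by (simp add: abs_mult mult_left_le)
qed

lemma ps_nonneg:
  assumes "\<And>m. 0 \<le> f m" "summable f" "0 \<le> x" "x \<le> 1"
  shows "0 \<le> ps f x"
  unfolding ps_def using assms by (intro suminf_nonneg ps_summable) auto

lemma ps_mono:
  assumes "\<And>m. 0 \<le> f m" "summable f" "0 \<le> x" "x \<le> y" "y \<le> 1"
  shows "ps f x \<le> ps f y"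
  unfolding ps_def
proof (rule suminf_le)
  show "summable (\<lambda>m. f m * x ^ m)" "summable (\<lambda>m. f m * y ^ m)"
    using assms by (auto intro!: ps_summable)
  fix m show "f m * x ^ m \<le> f m * y ^ m"
    using assms by (intro mult_left_mono power_mono) auto
qed

lemma ps_zero: "ps f 0 = f 0"
  unfolding ps_def using powser_zero[of f] by simp

lemma ps_one: "ps f 1 = suminf f"
  unfolding ps_def by simp

lemma ps_cont:
  assumes "\<And>m. 0 \<le> f m" "summable f"
  shows "continuous_on {0..1} (ps f)"
proof -
  have "uniform_limit {0..1} (\<lambda>n x. \<Sum>i<n. f i * x ^ i) (\<lambda>x. suminf (\<lambda>i. f i * x ^ i)) sequentially"
  proof (rule Weierstrass_m_test[OF _ assms(2)])
    fix n :: nat and x :: real assume "x \<in> {0..1}"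
    then have "x ^ n \<le> 1" "0 \<le> x ^ n" by (auto simp: power_le_one)
    then show "norm (f n * x ^ n) \<le> f n"
      using assms by (simp add: abs_mult mult_left_le)
  qed
  then have "uniform_limit {0..1} (\<lambda>n x. \<Sum>i<n. f i * x ^ i) (ps f) sequentially"
    unfolding ps_def by (simp add: fun_eq_iff)
  then show ?thesis
    by (rule uniform_limit_theorem[rotated]) (auto intro!: always_eventually continuous_intros)
qed

lemma ps_cs:
  assumes nn: "\<And>m. 0 \<le> f m" and s: "summable f" and x: "0 \<le> x" "x \<le> 1" and y: "0 \<le> y" "y \<le> 1"
  shows "ps f (sqrt x * sqrt y) \<le> sqrt (ps f x * ps f y)"
proof -
  have xy: "0 \<le> sqrt x * sqrt y" "sqrt x * sqrt y \<le> 1"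
    using x y by (auto simp: mult_le_one)
  have amgm: "ps f (sqrt x * sqrt y) \<le> (r * ps f x + ps f y / r) / 2" if r: "r > 0" for r
  proof -
    have "ps f (sqrt x * sqrt y) = (\<Sum>m. f m * (sqrt x * sqrt y) ^ m)" by (simp add: ps_def)
    also have "\<dots> \<le> (\<Sum>m. (r * (f m * x ^ m) + (f m * y ^ m) / r) / 2)"
    proof (rule suminf_le)
      show "summable (\<lambda>m. f m * (sqrt x * sqrt y) ^ m)" using ps_summable[OF nn s xy] .
      show "summable (\<lambda>m. (r * (f m * x ^ m) + (f m * y ^ m) / r) / 2)"
        using ps_summable[OF nn s x] ps_summable[OF nn s y]
        by (intro summable_divide summable_add summable_mult summable_divide) auto
      fix m
      have e: "(sqrt x * sqrt y) ^ m = sqrt (x ^ m * y ^ m)"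
        by (simp add: power_mult_distrib real_sqrt_power real_sqrt_mult)
      have "2 * sqrt (x ^ m * y ^ m) \<le> r * x ^ m + y ^ m / r"
        using r x y arith_geo_mean_sqrt[of "r * x ^ m" "y ^ m / r"] by simp
      then have "2 * (sqrt x * sqrt y) ^ m \<le> r * x ^ m + y ^ m / r" using e by simp
      from mult_left_mono[OF this nn[of m]]
      show "f m * (sqrt x * sqrt y) ^ m \<le> (r * (f m * x ^ m) + f m * y ^ m / r) / 2"
        by (simp add: algebra_simps)
    qed
    also have "\<dots> = (r * ps f x + ps f y / r) / 2"
    proof -
      have "(\<lambda>m. f m * x ^ m) sums ps f x" unfolding ps_def
        using ps_summable[OF nn s x] by (rule summable_sums)
      moreover have "(\<lambda>m. f m * y ^ m) sums ps f y" unfolding ps_def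
        using ps_summable[OF nn s y] by (rule summable_sums)
      ultimately have "(\<lambda>m. (r * (f m * x ^ m) + f m * y ^ m / r) / 2) sums ((r * ps f x + ps f y / r) / 2)"
        by (intro sums_divide sums_add sums_mult)
      then show ?thesis by (rule sums_unique[symmetric])
    qed
    finally show ?thesis .
  qed
  have px: "0 \<le> ps f x" and py: "0 \<le> ps f y" using ps_nonneg[OF nn s] x y by auto
  show ?thesis
  proof (cases "ps f x = 0 \<or> ps f y = 0")
    case True
    have "ps f (sqrt x * sqrt y) \<le> 0"
    proof (rule field_le_epsilon[of _ 0, simplified], rule ccontr)
      fix e :: real assume e: "0 < e" and n: "\<not> ps f (sqrt x * sqrt y) \<le> e"
      show False
      proof (cases "ps f x = 0")
        case True
        define r0 where "r0 = ps f y / (2*e) + 1"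
        have r0: "r0 > 0" using py e unfolding r0_def by (simp add: add_nonneg_pos)
        have "ps f (sqrt x * sqrt y) \<le> (r0 * ps f x + ps f y / r0) / 2" by (rule amgm[OF r0])
        also have "\<dots> = ps f y / r0 / 2" using True by simp
        also have "\<dots> < e" using py e r0 unfolding r0_def by (simp add: field_simps)
        finally show False using n by simp
      next
        case False
        then have "ps f y = 0" using \<open>ps f x = 0 \<or> ps f y = 0\<close> by simp
        have "ps f (sqrt x * sqrt y) \<le> (e / (ps f x + 1) * ps f x + 0) / 2"
          using amgm[of "e / (ps f x + 1)"] \<open>ps f y = 0\<close> px e by (simp add: add_nonneg_pos)
        also have "\<dots> < e" using px e by (simp add: field_simps add_pos_nonneg)
        finally show False using n by simp
      qed
    qed
    then show ?thesis using True by auto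
  next
    case False
    then have pos: "ps f x > 0" "ps f y > 0" using px py by auto
    define r where "r = sqrt (ps f y / ps f x)"
    have r: "r > 0" using pos by (simp add: r_def)
    have "ps f (sqrt x * sqrt y) \<le> (r * ps f x + ps f y / r) / 2" by (rule amgm[OF r])
    also have "\<dots> = sqrt (ps f x * ps f y)"
    proof -
      have sx: "sqrt (ps f x) > 0" "sqrt (ps f x) * sqrt (ps f x) = ps f x" using pos by auto
      have sy: "sqrt (ps f y) * sqrt (ps f y) = ps f y" using pos by auto
      have r': "r = sqrt (ps f y) / sqrt (ps f x)" unfolding r_def by (simp add: real_sqrt_divide)
      have "r * ps f x = sqrt (ps f x) * sqrt (ps f y)"
        unfolding r' using sx by (simp add: field_simps)
      moreover have "ps f y / r = sqrt (ps f x) * sqrt (ps f y)"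
        unfolding r' using sx sy pos by (simp add: field_simps)
      ultimately show ?thesis by (simp add: real_sqrt_mult)
    qed
    finally show ?thesis .
  qed
qed

definition dq :: "(nat \<Rightarrow> real) \<Rightarrow> real \<Rightarrow> real" where
  "dq f x = (\<Sum>m. f m * (\<Sum>j<m. x ^ j))"

lemma geo_bound:
  assumes "0 \<le> (x::real)" "x \<le> 1"
  shows "0 \<le> (\<Sum>j<m. x ^ j)" "(\<Sum>j<m. x ^ j) \<le> real m"
proof -
  show "0 \<le> (\<Sum>j<m. x ^ j)" using assms by (intro sum_nonneg) auto
  have "(\<Sum>j<m. x ^ j) \<le> (\<Sum>j<m. 1)" using assms by (intro sum_mono) (auto simp: power_le_one)
  then show "(\<Sum>j<m. x ^ j) \<le> real m" by simp
qed

lemma dq_summable: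
  fixes f :: "nat \<Rightarrow> real"
  assumes "\<And>m. 0 \<le> f m" "summable (\<lambda>m. real m * f m)" "0 \<le> x" "x \<le> 1"
  shows "summable (\<lambda>m. f m * (\<Sum>j<m. x ^ j))"
proof (rule summable_comparison_test'[OF assms(2)])
  fix m :: nat assume "m \<ge> 0"
  show "norm (f m * (\<Sum>j<m. x ^ j)) \<le> real m * f m"
    using geo_bound[OF assms(3,4), of m] assms(1)[of m] mult_left_mono[of "\<Sum>j<m. x ^ j" "real m" "f m"]
    by (simp add: abs_mult mult.commute)
qed

lemma dq_cont:
  assumes "\<And>m. 0 \<le> f m" "summable (\<lambda>m. real m * f m)"
  shows "continuous_on {0..1} (dq f)"
proof -
  have "uniform_limit {0..1} (\<lambda>n x. \<Sum>i<n. f i * (\<Sum>j<i. x ^ j)) (\<lambda>x. suminf (\<lambda>i. f i * (\<Sum>j<i. x ^ j))) sequentially"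
  proof (rule Weierstrass_m_test[OF _ assms(2)])
    fix n :: nat and x :: real assume "x \<in> {0..1}"
    then show "norm (f n * (\<Sum>j<n. x ^ j)) \<le> real n * f n"
      using geo_bound[of x n] assms(1)[of n] mult_left_mono[of "\<Sum>j<n. x ^ j" "real n" "f n"]
      by (simp add: abs_mult mult.commute)
  qed
  then have "uniform_limit {0..1} (\<lambda>n x. \<Sum>i<n. f i * (\<Sum>j<i. x ^ j)) (dq f) sequentially"
    unfolding dq_def by (simp add: fun_eq_iff)
  then show ?thesis
    by (rule uniform_limit_theorem[rotated]) (auto intro!: always_eventually continuous_intros)
qed

lemma dq_eq:
  fixes f :: "nat \<Rightarrow> real"
  assumes "\<And>m. 0 \<le> f m" "summable f" "summable (\<lambda>m. real m * f m)" "0 \<le> x" "x \<le> 1"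
  shows "ps f 1 - ps f x = (1 - x) * dq f x"
proof -
  have s1: "summable (\<lambda>m. f m * 1 ^ m)" using ps_summable[OF assms(1,2), of 1] by simp
  have s2: "summable (\<lambda>m. f m * x ^ m)" using ps_summable[OF assms(1,2,4,5)] .
  have "ps f 1 - ps f x = (\<Sum>m. f m * 1 ^ m - f m * x ^ m)"
    unfolding ps_def by (rule suminf_diff[OF s1 s2])
  also have "\<dots> = (\<Sum>m. (1 - x) * (f m * (\<Sum>j<m. x ^ j)))"
  proof (rule suminf_cong)
    fix m
    have e: "1 - x ^ m = (1 - x) * (\<Sum>j<m. x ^ j)" by (rule one_diff_power_eq)
    have "f m * 1 ^ m - f m * x ^ m = f m * (1 - x ^ m)" by (simp add: algebra_simps)
    also have "\<dots> = (1 - x) * (f m * (\<Sum>j<m. x ^ j))" unfolding e by (simp add: algebra_simps)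
    finally show "f m * 1 ^ m - f m * x ^ m = (1 - x) * (f m * (\<Sum>j<m. x ^ j))" .
  qed
  also have "\<dots> = (1 - x) * dq f x"
    unfolding dq_def by (rule suminf_mult[OF dq_summable[OF assms(1,3,4,5)]])
  finally show ?thesis .
qed

lemma dq_one: "dq f 1 = (\<Sum>m. real m * f m)"
  unfolding dq_def by (simp add: mult.commute)

definition cp :: "(nat \<Rightarrow> real) \<Rightarrow> (nat \<Rightarrow> real) \<Rightarrow> nat \<Rightarrow> real" where
  "cp f g n = (\<Sum>i\<le>n. f i * g (n - i))"

lemma cp_nonneg: "(\<And>m. 0 \<le> f m) \<Longrightarrow> (\<And>m. 0 \<le> g m) \<Longrightarrow> 0 \<le> cp f g n"
  unfolding cp_def by (intro sum_nonneg mult_nonneg_nonneg) auto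

lemma cp_sums:
  assumes f: "\<And>m. 0 \<le> f m" "summable f" and g: "\<And>m. 0 \<le> g m" "summable g"
    and x: "0 \<le> x" "x \<le> 1"
  shows "(\<lambda>n. cp f g n * x ^ n) sums (ps f x * ps g x)"
proof -
  have a: "summable (\<lambda>k. norm (f k * x ^ k))"
    using ps_summable[OF f x] f x by (simp add: abs_mult)
  have b: "summable (\<lambda>k. norm (g k * x ^ k))"
    using ps_summable[OF g x] g x by (simp add: abs_mult)
  have "(\<lambda>k. \<Sum>i\<le>k. (f i * x ^ i) * (g (k - i) * x ^ (k - i))) sums ((\<Sum>k. f k * x ^ k) * (\<Sum>k. g k * x ^ k))"
    by (rule Cauchy_product_sums[OF a b])
  moreover have "(\<lambda>k. \<Sum>i\<le>k. (f i * x ^ i) * (g (k - i) * x ^ (k - i))) = (\<lambda>n. cp f g n * x ^ n)"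
  proof
    fix k
    have "(\<Sum>i\<le>k. (f i * x ^ i) * (g (k - i) * x ^ (k - i))) = (\<Sum>i\<le>k. (f i * g (k - i)) * x ^ k)"
    proof (rule sum.cong[OF refl])
      fix i assume "i \<in> {..k}"
      then have "x ^ i * x ^ (k - i) = x ^ k" by (simp add: power_add[symmetric])
      then show "(f i * x ^ i) * (g (k - i) * x ^ (k - i)) = (f i * g (k - i)) * x ^ k"
        by (metis mult.assoc mult.left_commute)
    qed
    then show "(\<Sum>i\<le>k. (f i * x ^ i) * (g (k - i) * x ^ (k - i))) = cp f g k * x ^ k"
      unfolding cp_def by (simp add: sum_distrib_right)
  qed
  ultimately show ?thesis unfolding ps_def by simp
qed

lemma cp_summable:
  assumes "\<And>m. 0 \<le> f m" "summable f" "\<And>m. 0 \<le> g m" "summable g"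
  shows "summable (cp f g)"
  using sums_summable[OF cp_sums[OF assms, of 1]] by simp

lemma cp_ps:
  assumes "\<And>m. 0 \<le> f m" "summable f" "\<And>m. 0 \<le> g m" "summable g" "0 \<le> x" "x \<le> 1"
  shows "ps (cp f g) x = ps f x * ps g x"
  using sums_unique[OF cp_sums[OF assms]] unfolding ps_def by simp

lemma cp_zero: "cp f g 0 = f 0 * g 0"
  unfolding cp_def by simp

lemma ps_shift:
  fixes f :: "nat \<Rightarrow> real"
  assumes "\<And>m. 0 \<le> f m" "summable f" "f 0 = 0" "0 \<le> x" "x \<le> 1"
  shows "ps f x = x * ps (\<lambda>n. f (Suc n)) x"
  using powser_split_head(1)[OF ps_summable[OF assms(1,2,4,5)]] assms(3)
  unfolding ps_def by simp

lemma shift_summable: "summable (f::nat\<Rightarrow>real) \<Longrightarrow> summable (\<lambda>n. f (Suc n))"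
  by (simp add: summable_Suc_iff)

lemma T1_uv:
  fixes u v :: real assumes "0 < u" "u < v" "v < 1"
  shows "1 / v < (1 - v^2) / (1 - u^2) * (1 / u) + (v^2 - u^2) / (1 - u^2)"
proof -
  have u2: "u^2 < 1" using assms by (simp add: power_less_one_iff abs_less_iff)
  define D where "D = 1 - u^2"
  have D: "D > 0" using u2 by (simp add: D_def)
  define N where "N = (1 - v^2) + u * (v^2 - u^2)"
  have key: "v * N - u * D > 0"
  proof -
    have "v * N - u * D = (v - u) * (1 - u) * (1 - v) * (1 + u + v)"
      by (simp add: N_def D_def algebra_simps power2_eq_square)
    moreover have "(v - u) * (1 - u) * (1 - v) * (1 + u + v) > 0" using assms by simp
    ultimately show ?thesis by linarith
  qed
  have eq: "(1 - v^2) / (1 - u^2) * (1 / u) + (v^2 - u^2) / (1 - u^2) = N / (u * D)"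
    using D assms unfolding D_def[symmetric] N_def by (simp add: field_simps)
  have "N / (u * D) - 1 / v = (v * N - u * D) / (v * (u * D))"
    using D assms by (simp add: field_simps)
  also have "\<dots> > 0" using key D assms by (intro divide_pos_pos) auto
  finally show ?thesis unfolding eq by simp
qed

lemma T2_uv:
  fixes u v :: real assumes "0 < u" "u < v" "v < 1"
  shows "(1 - v^2) / (1 - u^2) * u + (v^2 - u^2) / (1 - u^2) \<le> v"
proof -
  have u2: "u^2 < 1" using assms by (simp add: power_less_one_iff abs_less_iff)
  define D where "D = 1 - u^2"
  have D: "D > 0" using u2 by (simp add: D_def)
  have key: "v * D - ((1 - v^2) * u + (v^2 - u^2)) \<ge> 0"
  proof -
    have "v * D - ((1 - v^2) * u + (v^2 - u^2)) = (v - u) * (1 - u) * (1 - v)"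
      by (simp add: D_def algebra_simps power2_eq_square)
    moreover have "(v - u) * (1 - u) * (1 - v) \<ge> 0" using assms by simp
    ultimately show ?thesis by linarith
  qed
  have "v - ((1 - v^2) / (1 - u^2) * u + (v^2 - u^2) / (1 - u^2)) = (v * D - ((1 - v^2) * u + (v^2 - u^2))) / D"
    using D unfolding D_def[symmetric] by (simp add: field_simps)
  also have "\<dots> \<ge> 0" using key D by simp
  finally show ?thesis by simp
qed

definition tw :: "real \<Rightarrow> real \<Rightarrow> real" where "tw x y = (y - x) / (1 - x)"

lemma tw_props:
  assumes "0 < x" "x < y" "y < 1"
  shows "0 < tw x y" "tw x y < 1" "1 - tw x y = (1 - y) / (1 - x)" "(1 - tw x y) * x + tw x y = y"
proof -
  show "0 < tw x y" "tw x y < 1" using assms by (auto simp: tw_def field_simps)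
  show t: "1 - tw x y = (1 - y) / (1 - x)" using assms by (simp add: tw_def field_simps)
  have "(1 - y) / (1 - x) * x + (y - x) / (1 - x) = ((1 - y) * x + (y - x)) / (1 - x)"
    by (simp add: add_divide_distrib)
  also have "(1 - y) * x + (y - x) = y * (1 - x)" by (simp add: algebra_simps)
  also have "y * (1 - x) / (1 - x) = y" using assms by simp
  finally show "(1 - tw x y) * x + tw x y = y" unfolding t by (simp add: tw_def)
qed

lemma T1:
  assumes "0 < x" "x < y" "y < 1"
  shows "1 / sqrt y < (1 - tw x y) * (1 / sqrt x) + tw x y * 1"
proof -
  have "1 / sqrt y < (1 - (sqrt y)^2) / (1 - (sqrt x)^2) * (1 / sqrt x) + ((sqrt y)^2 - (sqrt x)^2) / (1 - (sqrt x)^2)"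
    using assms by (intro T1_uv) (auto simp: real_sqrt_less_iff)
  then show ?thesis using assms unfolding tw_props(3)[OF assms] by (simp add: tw_def)
qed

lemma T2:
  assumes "0 < x" "x < y" "y < 1"
  shows "- sqrt y \<le> (1 - tw x y) * (- sqrt x) + tw x y * (- 1)"
proof -
  have "(1 - (sqrt y)^2) / (1 - (sqrt x)^2) * sqrt x + ((sqrt y)^2 - (sqrt x)^2) / (1 - (sqrt x)^2) \<le> sqrt y"
    using assms by (intro T2_uv) (auto simp: real_sqrt_less_iff)
  then show ?thesis using assms unfolding tw_props(3)[OF assms] by (simp add: tw_def)
qed

lemma sqrt_pow_powr: "0 < y \<Longrightarrow> sqrt y ^ k = y powr (real k / 2)"
proof -
  assume y: "0 < y"
  have "sqrt y ^ k = (y powr (1/2)) ^ k" using y by (simp add: powr_half_sqrt)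
  also have "\<dots> = (y powr (1/2)) powr (real k)" using y by (simp add: powr_realpow)
  also have "\<dots> = y powr (real k / 2)" by (simp add: powr_powr)
  finally show ?thesis .
qed

lemma T3:
  assumes "0 < x" "x < y" "y < 1" "2 \<le> k"
  shows "sqrt y ^ k \<le> (1 - tw x y) * sqrt x ^ k + tw x y * 1 ^ k"
proof -
  have "convex_on {0<..} (\<lambda>z. z powr (real k / 2))" using assms by (intro powr_convex) auto
  from convex_onD[OF this, of "tw x y" x 1] tw_props[OF assms(1-3)] assms
  have "((1 - tw x y) * x + tw x y * 1) powr (real k / 2) \<le> (1 - tw x y) * x powr (real k / 2) + tw x y * 1 powr (real k / 2)"
    by simp
  then show ?thesis using tw_props[OF assms(1-3)] assms sqrt_pow_powr[of y k] sqrt_pow_powr[of x k]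
    by simp
qed

lemma T3':
  assumes "0 < x" "x < y" "y < 1" "k \<noteq> 1"
  shows "sqrt y ^ k \<le> (1 - tw x y) * sqrt x ^ k + tw x y * 1 ^ k"
proof (cases "k = 0")
  case True then show ?thesis by simp
next
  case False then show ?thesis using T3[OF assms(1-3)] assms(4) by simp
qed

lemma sqrt_lip:
  fixes X Y a :: real assumes "0 \<le> a"
  shows "sqrt (X^2 + a) - sqrt (Y^2 + a) \<le> \<bar>X - Y\<bar>"
proof -
  define S where "S = sqrt (Y^2 + a)"
  have S0: "0 \<le> S" using assms by (simp add: S_def)
  have S2: "S^2 = Y^2 + a" using assms by (simp add: S_def)
  have YS: "\<bar>Y\<bar> \<le> S" unfolding S_def using assms by (intro real_le_rsqrt) simp
  have "\<bar>X\<bar> \<le> \<bar>X - Y\<bar> + \<bar>Y\<bar>" by linarith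
  then have "\<bar>X\<bar>^2 \<le> (\<bar>X - Y\<bar> + \<bar>Y\<bar>)^2" by (intro power_mono) auto
  then have "X^2 \<le> \<bar>X - Y\<bar>^2 + 2 * \<bar>X - Y\<bar> * \<bar>Y\<bar> + Y^2"
    by (simp add: power2_sum)
  also have "2 * \<bar>X - Y\<bar> * \<bar>Y\<bar> \<le> 2 * \<bar>X - Y\<bar> * S"
    using YS by (intro mult_left_mono) auto
  finally have "X^2 + a \<le> (\<bar>X - Y\<bar> + S)^2"
    using S2 by (simp add: power2_sum)
  then have "sqrt (X^2 + a) \<le> \<bar>X - Y\<bar> + S"
    using S0 by (intro real_le_lsqrt) auto
  then show ?thesis unfolding S_def by simp
qed

lemma Lm:
  fixes p1 p2 q1 q2 e1 e2 :: real
  assumes "p2 < p1" "q2 < q1" "0 \<le> e1" "e1 \<le> e2"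
  shows "p2 + q2 - sqrt ((q2 - p2)^2 + 4 * e2) < p1 + q1 - sqrt ((q1 - p1)^2 + 4 * e1)"
proof -
  have A: "sqrt ((q2 - p2)^2 + 4 * e1) \<le> sqrt ((q2 - p2)^2 + 4 * e2)" using assms by simp
  have B: "sqrt ((q1 - p1)^2 + 4 * e1) - sqrt ((q2 - p2)^2 + 4 * e1) \<le> \<bar>(q1 - p1) - (q2 - p2)\<bar>"
    using assms by (intro sqrt_lip) simp
  have C: "\<bar>(q1 - p1) - (q2 - p2)\<bar> < (p1 - p2) + (q1 - q2)" using assms by (simp add: abs_less_iff)
  show ?thesis using A B C by linarith
qed

lemma Ray:
  fixes c s p q k :: real assumes "c^2 + s^2 = 1"
  shows "2 * (c^2 * p + s^2 * q + 2 * c * s * k) \<le> p + q + sqrt ((q - p)^2 + 4 * k^2)"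
proof -
  have "(c^2 - s^2) * (p - q) + (2 * c * s) * (2*k) \<le> sqrt ((p - q)^2 + (2*k)^2)"
  proof (rule real_le_rsqrt)
    have "((c^2 - s^2) * (p - q) + (2 * c * s) * (2*k))^2 \<le> ((c^2 - s^2)^2 + (2 * c * s)^2) * ((p - q)^2 + (2*k)^2)"
    proof -
      have "((c^2 - s^2)^2 + (2 * c * s)^2) * ((p - q)^2 + (2*k)^2) - ((c^2 - s^2) * (p - q) + (2 * c * s) * (2*k))^2
            = ((c^2 - s^2) * (2*k) - (2 * c * s) * (p - q))^2"
        by (simp add: algebra_simps power2_eq_square)
      moreover have "((c^2 - s^2) * (2*k) - (2 * c * s) * (p - q))^2 \<ge> 0" by simp
      ultimately show ?thesis by linarith
    qed
    also have "(c^2 - s^2)^2 + (2 * c * s)^2 = (c^2 + s^2)^2" by (simp add: power2_eq_square algebra_simps)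
    finally show "((c^2 - s^2) * (p - q) + (2 * c * s) * (2*k))^2 \<le> (p - q)^2 + (2*k)^2"
      using assms by simp
  qed
  moreover have "2 * (c^2 * p + s^2 * q + 2 * c * s * k) = (c^2 + s^2) * (p + q) + ((c^2 - s^2) * (p - q) + (2 * c * s) * (2*k))"
    by (simp add: algebra_simps power2_eq_square)
  moreover have "(p - q)^2 + (2*k)^2 = (q - p)^2 + 4 * k^2" by (simp add: power2_eq_square algebra_simps)
  ultimately show ?thesis using assms by simp
qed

lemma RayEq:
  fixes p q k :: real assumes k: "0 \<le> k"
  shows "\<exists>c s. 0 \<le> c \<and> 0 \<le> s \<and> c^2 + s^2 = 1 \<and>
           2 * (c^2 * p + s^2 * q + 2 * c * s * k) = p + q + sqrt ((q - p)^2 + 4 * k^2)"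
proof (cases "(p - q)^2 + 4 * k^2 = 0")
  case True
  then have "p = q" "k = 0" by (auto simp: add_nonneg_eq_0_iff)
  then show ?thesis by (intro exI[of _ 1] exI[of _ 0]) auto
next
  case False
  define \<rho> where "\<rho> = sqrt ((p - q)^2 + 4 * k^2)"
  have "(p - q)^2 + 4 * k^2 \<ge> 0" by simp
  then have "(p - q)^2 + 4 * k^2 > 0" using False by linarith
  then have rho: "\<rho> > 0" unfolding \<rho>_def by simp
  have rho2: "\<rho>^2 = (p - q)^2 + 4 * k^2" unfolding \<rho>_def by simp
  have absX: "\<bar>p - q\<bar> \<le> \<rho>" unfolding \<rho>_def by (rule real_le_rsqrt) simp
  define c where "c = sqrt ((1 + (p - q) / \<rho>) / 2)"
  define s where "s = sqrt ((1 - (p - q) / \<rho>) / 2)"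
  have X1: "-1 \<le> (p - q) / \<rho>" "(p - q) / \<rho> \<le> 1" using absX rho by (auto simp: field_simps abs_le_iff)
  have c2: "c^2 = (1 + (p - q) / \<rho>) / 2" unfolding c_def using X1 by simp
  have s2: "s^2 = (1 - (p - q) / \<rho>) / 2" unfolding s_def using X1 by simp
  have cs: "c * s = k / \<rho>"
  proof -
    have "c * s = sqrt ((1 - ((p - q) / \<rho>)^2) / 4)" unfolding c_def s_def
      by (simp add: real_sqrt_mult[symmetric] algebra_simps power2_eq_square)
    also have "(1 - ((p - q) / \<rho>)^2) / 4 = (k / \<rho>)^2"
      using rho rho2 by (simp add: field_simps power2_eq_square)
    also have "sqrt ((k / \<rho>)^2) = k / \<rho>" using k rho by simp
    finally show ?thesis .
  qed
  have "2 * (c^2 * p + s^2 * q + 2 * c * s * k) = p + q + (p - q)^2 / \<rho> + 4 * k^2 / \<rho>"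
    unfolding c2 s2 mult.assoc[symmetric]
    using rho by (simp add: cs field_simps power2_eq_square)
  also have "\<dots> = p + q + \<rho>" using rho rho2 by (simp add: field_simps power2_eq_square)
  also have "\<rho> = sqrt ((q - p)^2 + 4 * k^2)" unfolding \<rho>_def by (simp add: power2_commute)
  finally have eq: "2 * (c^2 * p + s^2 * q + 2 * c * s * k) = p + q + sqrt ((q - p)^2 + 4 * k^2)" .
  have cs2: "c^2 + s^2 = 1" using c2 s2 by simp
  have "0 \<le> c" "0 \<le> s" using X1 unfolding c_def s_def by simp_all
  then show ?thesis using cs2 eq by blast
qed

lemma term_le_suminf: "summable (f::nat\<Rightarrow>real) \<Longrightarrow> (\<And>n. 0 \<le> f n) \<Longrightarrow> f k \<le> suminf f"
  using sum_le_suminf[of f "{k}"] by simp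

lemma suminf_strict_first:
  fixes u v :: "nat \<Rightarrow> real"
  assumes "summable u" "summable v" "\<And>m. u m \<le> v m" "u 0 < v 0"
  shows "suminf u < suminf v"
proof -
  have "suminf u = u 0 + (\<Sum>n. u (Suc n))" using suminf_split_head[OF assms(1)] by simp
  moreover have "suminf v = v 0 + (\<Sum>n. v (Suc n))" using suminf_split_head[OF assms(2)] by simp
  moreover have "(\<Sum>n. u (Suc n)) \<le> (\<Sum>n. v (Suc n))"
    using assms by (intro suminf_le) (auto simp: summable_Suc_iff)
  ultimately show ?thesis using assms(4) by linarith
qed

lemma phi_sums:
  fixes f :: "nat \<Rightarrow> real"
  assumes "\<And>m. 0 \<le> f m" "summable f" "0 \<le> b" "b \<le> 1"
  shows "(\<lambda>m. f m * ((b ^ m - b) / K)) sums ((ps f b - b * ps f 1) / K)"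
proof -
  have 1: "(\<lambda>m. f m * b ^ m) sums ps f b"
    unfolding ps_def using ps_summable[OF assms] by (rule summable_sums)
  have 2: "(\<lambda>m. b * f m) sums (b * ps f 1)"
    unfolding ps_one using summable_sums[OF assms(2)] by (rule sums_mult)
  have "(\<lambda>m. (f m * b ^ m - b * f m) / K) sums ((ps f b - b * ps f 1) / K)"
    by (intro sums_divide sums_diff 1 2)
  then show ?thesis by (simp add: algebra_simps diff_divide_distrib)
qed

lemma geo_shift:
  fixes b :: real assumes "1 \<le> m"
  shows "b ^ m - b = - ((1 - b) * (b * (\<Sum>i<m - 1. b ^ i)))"
proof -
  obtain n where m: "m = Suc n" using assms by (cases m) auto
  have "1 - b ^ n = (1 - b) * (\<Sum>i<n. b ^ i)" by (rule one_diff_power_eq)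
  then have "b * (1 - b ^ n) = b * ((1 - b) * (\<Sum>i<n. b ^ i))" by simp
  then show ?thesis unfolding m by (simp add: algebra_simps)
qed

lemma phiM:
  assumes "0 < x" "x < y" "y < 1"
  shows "(y ^ m - y) / (sqrt y * (1 - y)) \<le> (x ^ m - x) / (sqrt x * (1 - x))"
    and "m = 0 \<Longrightarrow> (y ^ m - y) / (sqrt y * (1 - y)) < (x ^ m - x) / (sqrt x * (1 - x))"
proof -
  have sx: "sqrt x > 0" "sqrt x < sqrt y" using assms by (auto simp: real_sqrt_less_iff)
  {
    assume "m = 0"
    then show "(y ^ m - y) / (sqrt y * (1 - y)) < (x ^ m - x) / (sqrt x * (1 - x))"
      using assms sx by (simp add: divide_strict_left_mono)
  }
  show "(y ^ m - y) / (sqrt y * (1 - y)) \<le> (x ^ m - x) / (sqrt x * (1 - x))"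
  proof (cases "m = 0")
    case True
    then show ?thesis using assms sx by (simp add: divide_left_mono)
  next
    case False
    then have m: "1 \<le> m" by simp
    have r: "(b ^ m - b) / (sqrt b * (1 - b)) = - (sqrt b * (\<Sum>i<m - 1. b ^ i))" if "0 < b" "b < 1" for b
    proof -
      have bb: "b / sqrt b = sqrt b" using that by (simp add: real_div_sqrt)
      have "(b ^ m - b) / (sqrt b * (1 - b)) = - ((1 - b) * (b * (\<Sum>i<m - 1. b ^ i))) / (sqrt b * (1 - b))"
        unfolding geo_shift[OF m, of b] by simp
      also have "\<dots> = - ((b / sqrt b) * (\<Sum>i<m - 1. b ^ i))" using that by (simp add: field_simps)
      finally show ?thesis unfolding bb .
    qed
    have "sqrt x * (\<Sum>i<m - 1. x ^ i) \<le> sqrt y * (\<Sum>i<m - 1. y ^ i)"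
      using assms sx by (intro mult_mono sum_mono power_mono sum_nonneg) auto
    then show ?thesis using r[of x] r[of y] assms by simp
  qed
qed

lemma powm_sqrt:
  assumes "0 < b" "1 \<le> m"
  shows "(b ^ m - b) / sqrt b = sqrt b ^ (2 * m - 1) - sqrt b"
proof -
  obtain n where m: "m = Suc n" using assms by (cases m) auto
  have "b ^ m = (sqrt b ^ 2) ^ m" using assms by simp
  also have "\<dots> = sqrt b ^ (2 * m)" by (simp add: power_mult)
  also have "2 * m = Suc (2 * m - 1)" using assms by simp
  finally have bm: "b ^ m = sqrt b ^ (2 * m - 1) * sqrt b" by (simp add: power_Suc2)
  show ?thesis using assms unfolding bm by (simp add: field_simps)
qed

lemma phiT:
  assumes "0 < x" "x < y" "y < 1"
  shows "(y ^ m - y) / sqrt y \<le> (1 - tw x y) * ((x ^ m - x) / sqrt x) + tw x y * ((1 ^ m - 1) / sqrt 1)"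
    and "m = 0 \<Longrightarrow> (y ^ m - y) / sqrt y < (1 - tw x y) * ((x ^ m - x) / sqrt x) + tw x y * ((1 ^ m - 1) / sqrt 1)"
proof -
  have t1: "1 / sqrt y < (1 - tw x y) * (1 / sqrt x) + tw x y * 1" by (rule T1[OF assms])
  have t2: "- sqrt y \<le> (1 - tw x y) * (- sqrt x) + tw x y * (- 1)" by (rule T2[OF assms])
  have z: "(1 - b) / sqrt b = 1 / sqrt b - sqrt b" if "0 < b" for b :: real
  proof -
    have "sqrt b * sqrt b = b" using that by simp
    then show ?thesis using that by (simp add: field_simps)
  qed
  have case0: "(y ^ 0 - y) / sqrt y < (1 - tw x y) * ((x ^ 0 - x) / sqrt x) + tw x y * ((1 ^ 0 - 1) / sqrt 1)"
  proof -
    have l: "(y ^ 0 - y) / sqrt y = 1 / sqrt y - sqrt y" using z[of y] assms by simp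
    have r: "(1 - tw x y) * ((x ^ 0 - x) / sqrt x) + tw x y * ((1 ^ 0 - 1) / sqrt 1)
           = (1 - tw x y) * (1 / sqrt x) - (1 - tw x y) * sqrt x"
    proof -
      have zx: "(x ^ 0 - x) / sqrt x = 1 / sqrt x - sqrt x" using z[of x] assms by simp
      show ?thesis unfolding zx by (simp add: algebra_simps)
    qed
    show ?thesis unfolding l r using t1 t2 by (simp add: algebra_simps)
  qed
  {
    assume "m = 0" then show "(y ^ m - y) / sqrt y < (1 - tw x y) * ((x ^ m - x) / sqrt x) + tw x y * ((1 ^ m - 1) / sqrt 1)"
      using case0 by simp
  }
  show "(y ^ m - y) / sqrt y \<le> (1 - tw x y) * ((x ^ m - x) / sqrt x) + tw x y * ((1 ^ m - 1) / sqrt 1)"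
  proof (cases "m = 0")
    case True then show ?thesis using case0 by simp
  next
    case False
    then have m: "1 \<le> m" by simp
    show ?thesis
    proof (cases "m = 1")
      case True then show ?thesis by simp
    next
      case False
    have t3: "sqrt y ^ (2 * m - 1) \<le> (1 - tw x y) * sqrt x ^ (2 * m - 1) + tw x y * 1 ^ (2 * m - 1)"
      using m False by (intro T3[OF assms]) auto
    have e1: "(x ^ m - x) / sqrt x = sqrt x ^ (2 * m - 1) - sqrt x" using powm_sqrt[OF _ m, of x] assms by simp
    have e2: "(y ^ m - y) / sqrt y = sqrt y ^ (2 * m - 1) - sqrt y" using powm_sqrt[OF _ m, of y] assms by simp
    show ?thesis unfolding e1 e2 using t2 t3 by (simp add: algebra_simps)
    qed
  qed
qed

lemma sqrt_div_pos: "(w::real) > 0 \<Longrightarrow> sqrt X / w = sqrt (X / w^2)"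
  by (simp add: real_sqrt_divide)

locale quad =
  fixes fa fb fc fd :: "nat \<Rightarrow> real"
  assumes nna: "\<And>m. 0 \<le> fa m" and nnb: "\<And>m. 0 \<le> fb m"
    and nnc: "\<And>m. 0 \<le> fc m" and nnd: "\<And>m. 0 \<le> fd m"
    and sa: "summable fa" and sb: "summable fb" and sc: "summable fc" and sd: "summable fd"
    and Apos: "0 < ps fa 1" and Dpos: "0 < ps fd 1"
    and ad0: "fa 0 = 0 \<or> fd 0 = 0"
    and bc0: "fb 0 = fc 0" and b0: "0 < fb 0"
begin

definition "PP x = ps fb x - x * (ps fa 1 + ps fb 1)"
definition "QQ x = ps fc x - x * (ps fc 1 + ps fd 1)"
definition "RR x = sqrt ((QQ x - PP x)^2 + 4 * ps fa x * ps fd x)"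
definition "ee n = cp fa fd (Suc n)"
definition "EE x = ps ee x"

lemma c0: "0 < fc 0" using b0 bc0 by simp

lemma ee_nn: "0 \<le> ee n"
  unfolding ee_def by (rule cp_nonneg[OF nna nnd])

lemma ee_sum: "summable ee"
  unfolding ee_def by (rule shift_summable[OF cp_summable[OF nna sa nnd sd]])

lemma EE_nn: "0 \<le> x \<Longrightarrow> x \<le> 1 \<Longrightarrow> 0 \<le> EE x"
  unfolding EE_def by (rule ps_nonneg[OF ee_nn ee_sum])

lemma AD_eq:
  assumes "0 \<le> x" "x \<le> 1"
  shows "ps fa x * ps fd x = x * EE x"
proof -
  have "ps fa x * ps fd x = ps (cp fa fd) x" using cp_ps[OF nna sa nnd sd assms] by simp
  also have "\<dots> = x * ps (\<lambda>n. cp fa fd (Suc n)) x"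
    using ad0 by (intro ps_shift cp_nonneg nna nnd cp_summable sa sd assms) (auto simp: cp_zero)
  finally show ?thesis unfolding EE_def ee_def .
qed

lemma EE1: "EE 1 = ps fa 1 * ps fd 1"
  using AD_eq[of 1] by simp

lemma PP1: "PP 1 = - ps fa 1" unfolding PP_def by simp
lemma QQ1: "QQ 1 = - ps fd 1" unfolding QQ_def by simp

lemma KEYm:
  assumes x: "0 < x" "x < y" "y < 1"
  shows "(PP y + QQ y - RR y) / (sqrt y * (1 - y)) < (PP x + QQ x - RR x) / (sqrt x * (1 - x))"
proof -
  define w where "w b = sqrt b * (1 - b)" for b :: real
  have wpos: "0 < b \<Longrightarrow> b < 1 \<Longrightarrow> 0 < w b" for b unfolding w_def by simp
  define p where "p b = PP b / w b" for b
  define q where "q b = QQ b / w b" for b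
  define e where "e b = EE b / (1 - b)^2" for b
  have repr: "(PP b + QQ b - RR b) / w b = p b + q b - sqrt ((q b - p b)^2 + 4 * e b)"
    if b: "0 < b" "b < 1" for b
  proof -
    have "RR b / w b = sqrt (((QQ b - PP b)^2 + 4 * ps fa b * ps fd b) / (w b)^2)"
      unfolding RR_def using wpos[OF b] by (rule sqrt_div_pos)
    also have "((QQ b - PP b)^2 + 4 * ps fa b * ps fd b) / (w b)^2 = (q b - p b)^2 + 4 * e b"
    proof -
      have "ps fa b * ps fd b = b * EE b" using AD_eq b by simp
      moreover have "(w b)^2 = b * (1 - b)^2" unfolding w_def using b by (simp add: power_mult_distrib)
      ultimately have 1: "4 * ps fa b * ps fd b / (w b)^2 = 4 * e b"
        unfolding e_def using b by (simp add: field_simps)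
      have 2: "(QQ b - PP b)^2 / (w b)^2 = (q b - p b)^2"
        unfolding p_def q_def diff_divide_distrib[symmetric] by (rule power_divide[symmetric])
      show ?thesis using 1 2 by (simp add: add_divide_distrib)
    qed
    finally show ?thesis unfolding p_def q_def using wpos[OF b] by (simp add: diff_divide_distrib add_divide_distrib)
  qed
  have sw: "b / w b = sqrt b / (1 - b)" if "0 < b" "b < 1" for b
  proof -
    have "b = sqrt b * sqrt b" using that by simp
    then show ?thesis unfolding w_def using that by (metis divide_divide_eq_left nonzero_mult_div_cancel_left
          real_sqrt_gt_zero times_divide_eq_right less_numeral_extra(3) mult_eq_0_iff)
  qed
  have swm: "sqrt x / (1 - x) < sqrt y / (1 - y)"
    using x by (intro frac_less2) (auto simp: real_sqrt_less_iff)
  have gen: "(ps f y - y * ps f 1) / w y - C * (y / w y) < (ps f x - x * ps f 1) / w x - C * (x / w x)"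
    if f: "\<And>m. 0 \<le> f m" "summable f" "0 < f 0" and C: "0 < C" for f C
  proof -
    have sy: "(\<lambda>m. f m * ((y ^ m - y) / w y)) sums ((ps f y - y * ps f 1) / w y)"
      using x by (intro phi_sums f) auto
    have sx: "(\<lambda>m. f m * ((x ^ m - x) / w x)) sums ((ps f x - x * ps f 1) / w x)"
      using x by (intro phi_sums f) auto
    have "(ps f y - y * ps f 1) / w y < (ps f x - x * ps f 1) / w x"
      unfolding sums_unique[OF sy] sums_unique[OF sx]
    proof (rule suminf_strict_first)
      show "summable (\<lambda>m. f m * ((y ^ m - y) / w y))" using sy by (rule sums_summable)
      show "summable (\<lambda>m. f m * ((x ^ m - x) / w x))" using sx by (rule sums_summable)
      fix m show "f m * ((y ^ m - y) / w y) \<le> f m * ((x ^ m - x) / w x)"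
        unfolding w_def using phiM(1)[OF x, of m] f(1)[of m] by (rule mult_left_mono)
    next
      show "f 0 * ((y ^ 0 - y) / w y) < f 0 * ((x ^ 0 - x) / w x)"
        unfolding w_def using phiM(2)[OF x, of 0] f(3) by (intro mult_strict_left_mono) auto
    qed
    moreover have "C * (x / w x) < C * (y / w y)"
      unfolding sw[OF x(1) less_trans[OF x(2,3)]] sw[OF less_trans[OF x(1,2)] x(3)]
      using swm C by (rule mult_strict_left_mono)
    ultimately show ?thesis by linarith
  qed
  have pd: "p y < p x"
  proof -
    have "p b = (ps fb b - b * ps fb 1) / w b - ps fa 1 * (b / w b)" if "0 < b" "b < 1" for b
      unfolding p_def PP_def using wpos[OF that] by (simp add: field_simps)
    then show ?thesis using gen[OF nnb sb b0 Apos] x by simp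
  qed
  have qd: "q y < q x"
  proof -
    have "q b = (ps fc b - b * ps fc 1) / w b - ps fd 1 * (b / w b)" if "0 < b" "b < 1" for b
      unfolding q_def QQ_def using wpos[OF that] by (simp add: field_simps)
    then show ?thesis using gen[OF nnc sc c0 Dpos] x by simp
  qed
  have ei: "0 \<le> e x" "e x \<le> e y"
  proof -
    show "0 \<le> e x" unfolding e_def using EE_nn[of x] x by simp
    have "EE x \<le> EE y" unfolding EE_def using x by (intro ps_mono ee_nn ee_sum) auto
    moreover have "(1 - y)^2 \<le> (1 - x)^2" using x by (intro power_mono) auto
    moreover have "0 < (1 - y)^2" using x by simp
    ultimately show "e x \<le> e y" unfolding e_def using EE_nn[of x] x
      by (intro frac_le) auto
  qed
  have "p y + q y - sqrt ((q y - p y)^2 + 4 * e y) < p x + q x - sqrt ((q x - p x)^2 + 4 * e x)"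
    by (rule Lm[OF pd qd ei])
  then show ?thesis using repr[of x] repr[of y] x unfolding w_def by simp
qed

end

context quad begin

lemma Pser_TP:
  fixes f :: "nat \<Rightarrow> real"
  assumes f: "\<And>m. 0 \<le> f m" "summable f" "0 < f 0" and x: "0 < x" "x < y" "y < 1"
  shows "(ps f y - y * ps f 1) / sqrt y < (1 - tw x y) * ((ps f x - x * ps f 1) / sqrt x) + tw x y * ((ps f 1 - 1 * ps f 1) / sqrt 1)"
proof -
  define t where "t = tw x y"
  have sy: "(\<lambda>m. f m * ((y ^ m - y) / sqrt y)) sums ((ps f y - y * ps f 1) / sqrt y)"
    using x by (intro phi_sums f) auto
  have sx: "(\<lambda>m. f m * ((x ^ m - x) / sqrt x)) sums ((ps f x - x * ps f 1) / sqrt x)"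
    using x by (intro phi_sums f) auto
  have s1: "(\<lambda>m. f m * ((1 ^ m - 1) / sqrt 1)) sums ((ps f 1 - 1 * ps f 1) / sqrt 1)"
    by (intro phi_sums f) auto
  have sv: "(\<lambda>m. (1 - t) * (f m * ((x ^ m - x) / sqrt x)) + t * (f m * ((1 ^ m - 1) / sqrt 1)))
      sums ((1 - t) * ((ps f x - x * ps f 1) / sqrt x) + t * ((ps f 1 - 1 * ps f 1) / sqrt 1))"
    by (intro sums_add sums_mult sx s1)
  have "(\<Sum>m. f m * ((y ^ m - y) / sqrt y)) < (\<Sum>m. (1 - t) * (f m * ((x ^ m - x) / sqrt x)) + t * (f m * ((1 ^ m - 1) / sqrt 1)))"
  proof (rule suminf_strict_first)
    show "summable (\<lambda>m. f m * ((y ^ m - y) / sqrt y))" using sy by (rule sums_summable)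
    show "summable (\<lambda>m. (1 - t) * (f m * ((x ^ m - x) / sqrt x)) + t * (f m * ((1 ^ m - 1) / sqrt 1)))"
      using sv by (rule sums_summable)
    fix m
    have "f m * ((y ^ m - y) / sqrt y) \<le> f m * ((1 - t) * ((x ^ m - x) / sqrt x) + t * ((1 ^ m - 1) / sqrt 1))"
      using phiT(1)[OF x, of m] f(1)[of m] unfolding t_def by (rule mult_left_mono)
    then show "f m * ((y ^ m - y) / sqrt y) \<le> (1 - t) * (f m * ((x ^ m - x) / sqrt x)) + t * (f m * ((1 ^ m - 1) / sqrt 1))"
      by (simp add: algebra_simps)
  next
    have "f 0 * ((y ^ 0 - y) / sqrt y) < f 0 * ((1 - t) * ((x ^ 0 - x) / sqrt x) + t * ((1 ^ 0 - 1) / sqrt 1))"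
      using phiT(2)[OF x, of 0] f(3) unfolding t_def by (intro mult_strict_left_mono) auto
    then show "f 0 * ((y ^ 0 - y) / sqrt y) < (1 - t) * (f 0 * ((x ^ 0 - x) / sqrt x)) + t * (f 0 * ((1 ^ 0 - 1) / sqrt 1))"
      by (simp add: algebra_simps)
  qed
  then show ?thesis using sums_unique[OF sy] sums_unique[OF sv] unfolding t_def by linarith
qed

lemma KEYp:
  assumes x: "0 < x" "x < y" "y < 1"
  shows "(PP y + QQ y + RR y) / (sqrt y * (1 - y)) < (PP x + QQ x + RR x) / (sqrt x * (1 - x))"
proof -
  define t where "t = tw x y"
  have tp: "0 < t" "t < 1" "1 - t = (1 - y) / (1 - x)" using tw_props[OF x] unfolding t_def by auto
  define A1 where "A1 = ps fa 1"
  define D1 where "D1 = ps fd 1"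
  define pt where "pt b = PP b / sqrt b" for b
  define qt where "qt b = QQ b / sqrt b" for b
  define kk where "kk b = sqrt (EE b)" for b
  define gam where "gam b = pt b + qt b + sqrt ((qt b - pt b)^2 + 4 * (kk b)^2)" for b
  have gamq: "(PP b + QQ b + RR b) / sqrt b = gam b" if b: "0 < b" "b \<le> 1" for b
  proof -
    have "RR b / sqrt b = sqrt (((QQ b - PP b)^2 + 4 * ps fa b * ps fd b) / (sqrt b)^2)"
      unfolding RR_def using b by (intro sqrt_div_pos) auto
    also have "((QQ b - PP b)^2 + 4 * ps fa b * ps fd b) / (sqrt b)^2 = (qt b - pt b)^2 + 4 * (kk b)^2"
    proof -
      have "ps fa b * ps fd b = b * EE b" using AD_eq b by simp
      then have "4 * ps fa b * ps fd b / (sqrt b)^2 = 4 * (b * EE b) / b" using b by (simp add: mult.assoc)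
      also have "\<dots> = 4 * (kk b)^2" unfolding kk_def using b EE_nn[of b] by simp
      finally have 1: "4 * ps fa b * ps fd b / (sqrt b)^2 = 4 * (kk b)^2" .
      have 2: "(QQ b - PP b)^2 / (sqrt b)^2 = (qt b - pt b)^2"
        unfolding pt_def qt_def diff_divide_distrib[symmetric] by (rule power_divide[symmetric])
      show ?thesis using 1 2 by (simp add: add_divide_distrib)
    qed
    finally show ?thesis unfolding gam_def pt_def qt_def by (simp add: add_divide_distrib)
  qed
  have gam1: "gam 1 = 0"
  proof -
    have p1: "pt 1 = - A1" unfolding pt_def A1_def using PP1 by simp
    have q1: "qt 1 = - D1" unfolding qt_def D1_def using QQ1 by simp
    have k1: "(kk 1)^2 = A1 * D1" unfolding kk_def A1_def D1_def using EE1 EE_nn[of 1] by simp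
    have s: "(qt 1 - pt 1)^2 + 4 * (kk 1)^2 = (A1 + D1)^2" unfolding p1 q1 k1 by algebra
    have "A1 + D1 > 0" using Apos Dpos unfolding A1_def D1_def by simp
    then have "sqrt ((qt 1 - pt 1)^2 + 4 * (kk 1)^2) = A1 + D1" unfolding s by simp
    then show ?thesis unfolding gam_def p1 q1 by simp
  qed
  obtain c s where cs: "0 \<le> c" "0 \<le> s" "c^2 + s^2 = 1"
    and ceq: "2 * (c^2 * pt y + s^2 * qt y + 2 * c * s * kk y) = pt y + qt y + sqrt ((qt y - pt y)^2 + 4 * (kk y)^2)"
  proof -
    have "0 \<le> kk y" unfolding kk_def using EE_nn[of y] x by simp
    from RayEq[OF this, of "pt y" "qt y"] show ?thesis using that by blast
  qed
  define N where "N = kk y"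
  define L where "L b = (if N = 0 then 0 else ps ee (sqrt y * sqrt b) / N)" for b
  have N0: "0 \<le> N" unfolding N_def kk_def using EE_nn[of y] x by simp
  have Ly: "L y = kk y"
  proof (cases "N = 0")
    case True then show ?thesis unfolding L_def N_def by simp
  next
    case False
    have "ps ee (sqrt y * sqrt y) = N^2" unfolding N_def kk_def EE_def using x ps_nonneg[OF ee_nn ee_sum, of y] by simp
    then show ?thesis using False unfolding L_def N_def by (simp add: power2_eq_square)
  qed
  have Lle: "L b \<le> kk b" if b: "0 \<le> b" "b \<le> 1" for b
  proof (cases "N = 0")
    case True then show ?thesis unfolding L_def kk_def using EE_nn[OF b] by simp
  next
    case False
    then have Np: "N > 0" using N0 by simp
    have "ps ee (sqrt y * sqrt b) \<le> sqrt (ps ee y * ps ee b)"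
      using x b by (intro ps_cs ee_nn ee_sum) auto
    also have "\<dots> = N * kk b" unfolding N_def kk_def EE_def by (simp add: real_sqrt_mult)
    finally show ?thesis using False Np unfolding L_def by (simp add: field_simps)
  qed
  define G where "G b = 2 * (c^2 * pt b + s^2 * qt b + 2 * c * s * L b)" for b
  have Gle: "G b \<le> gam b" if b: "0 \<le> b" "b \<le> 1" for b
  proof -
    have "2 * c * s * L b \<le> 2 * c * s * kk b" using Lle[OF b] cs by (intro mult_left_mono) auto
    then have "G b \<le> 2 * (c^2 * pt b + s^2 * qt b + 2 * c * s * kk b)" unfolding G_def by simp
    also have "\<dots> \<le> gam b" unfolding gam_def by (rule Ray[OF cs(3)])
    finally show ?thesis .
  qed
  have Gy: "G y = gam y" unfolding G_def gam_def Ly using ceq .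
  define Pb where "Pb b = (ps fb b - b * ps fb 1) / sqrt b" for b
  define Pc where "Pc b = (ps fc b - b * ps fc 1) / sqrt b" for b
  define K where "K = sqrt (A1 * D1)"
  define W where "W = (c * sqrt A1 - s * sqrt D1)^2"
  define Lt where "Lt b = L b - K * sqrt b" for b
  have decomp: "G b = 2 * c^2 * Pb b + 2 * s^2 * Pc b + 4 * c * s * Lt b - 2 * W * sqrt b" if b: "0 < b" for b
  proof -
    have bb: "b / sqrt b = sqrt b" using b by (simp add: real_div_sqrt)
    have sb: "sqrt b > 0" using b by simp
    have pt: "pt b = Pb b - A1 * sqrt b"
    proof -
      have "pt b = ((ps fb b - b * ps fb 1) - A1 * b) / sqrt b"
        unfolding pt_def PP_def A1_def by (simp add: algebra_simps)
      also have "\<dots> = (ps fb b - b * ps fb 1) / sqrt b - A1 * (b / sqrt b)"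
        by (simp add: diff_divide_distrib)
      finally have "pt b = (ps fb b - b * ps fb 1) / sqrt b - A1 * (b / sqrt b)" .
      then show ?thesis unfolding bb Pb_def .
    qed
    have qt: "qt b = Pc b - D1 * sqrt b"
    proof -
      have "qt b = ((ps fc b - b * ps fc 1) - D1 * b) / sqrt b"
        unfolding qt_def QQ_def D1_def by (simp add: algebra_simps)
      also have "\<dots> = (ps fc b - b * ps fc 1) / sqrt b - D1 * (b / sqrt b)"
        by (simp add: diff_divide_distrib)
      finally have "qt b = (ps fc b - b * ps fc 1) / sqrt b - D1 * (b / sqrt b)" .
      then show ?thesis unfolding bb Pc_def .
    qed
    have A0: "0 \<le> A1" "0 \<le> D1" using Apos Dpos unfolding A1_def D1_def by auto
    have K: "K = sqrt A1 * sqrt D1" unfolding K_def by (simp add: real_sqrt_mult)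
    have "W = c^2 * (sqrt A1)^2 - 2 * c * s * (sqrt A1 * sqrt D1) + s^2 * (sqrt D1)^2"
      unfolding W_def by algebra
    then have Weq: "W = c^2 * A1 - 2 * c * s * K + s^2 * D1" using A0 unfolding K by simp
    show ?thesis unfolding G_def pt qt Lt_def Weq by algebra
  qed
  have TPb: "Pb y < (1 - t) * Pb x + t * Pb 1"
    using Pser_TP[OF nnb sb b0 x] unfolding Pb_def t_def by simp
  have TPc: "Pc y < (1 - t) * Pc x + t * Pc 1"
    using Pser_TP[OF nnc sc c0 x] unfolding Pc_def t_def by simp
  have TPs: "- sqrt y \<le> (1 - t) * (- sqrt x) + t * (- sqrt 1)"
    using T2[OF x] unfolding t_def by simp
  have K0: "0 \<le> K" unfolding K_def using Apos Dpos unfolding A1_def D1_def by simp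
  have TPL: "Lt y \<le> (1 - t) * Lt x + t * Lt 1"
  proof (cases "N = 0")
    case True
    then have "Lt b = K * (- sqrt b)" for b unfolding Lt_def L_def by simp
    then show ?thesis using mult_left_mono[OF TPs K0] by (simp add: algebra_simps)
  next
    case False
    then have Np: "N > 0" using N0 by simp
    define eps where "eps n = ee n * sqrt y ^ n / N" for n
    define tau where "tau n b = eps n * sqrt b ^ n - (if n = 1 then K * sqrt b else 0)" for n b
    have eps0: "0 \<le> eps n" for n unfolding eps_def using ee_nn[of n] Np x
      by (intro divide_nonneg_pos mult_nonneg_nonneg) auto
    have eps1: "eps 1 \<le> K"
    proof (cases "ee 1 = 0")
      case True then show ?thesis using K0 unfolding eps_def by simp
    next
      case False
      then have e1p: "ee 1 > 0" using ee_nn[of 1] by simp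
      have "ee 1 * y \<le> ps ee y" unfolding ps_def
        using term_le_suminf[of "\<lambda>n. ee n * y ^ n" 1] ps_summable[OF ee_nn ee_sum, of y] ee_nn x by simp
      then have "sqrt (ee 1 * y) \<le> N" unfolding N_def kk_def EE_def by simp
      then have "sqrt (ee 1) * sqrt y \<le> N" by (simp add: real_sqrt_mult)
      then have "eps 1 \<le> ee 1 * sqrt y / (sqrt (ee 1) * sqrt y)"
        unfolding eps_def power_one_right
      proof (rule divide_left_mono)
        show "0 \<le> ee 1 * sqrt y" using e1p x by simp
        show "0 < N * (sqrt (ee 1) * sqrt y)" using Np e1p x by simp
      qed
      also have "\<dots> = sqrt (ee 1)" using e1p x by (simp add: field_simps)
      also have "\<dots> \<le> sqrt (ps ee 1)"
        using term_le_suminf[OF ee_sum ee_nn, of 1] unfolding ps_one by simp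
      also have "ps ee 1 = A1 * D1" using EE1 unfolding EE_def A1_def D1_def by simp
      finally show ?thesis unfolding K_def .
    qed
    have taus: "(\<lambda>n. tau n b) sums Lt b" if b: "0 \<le> b" "b \<le> 1" for b
    proof -
      have "(\<lambda>n. ee n * (sqrt y * sqrt b) ^ n) sums ps ee (sqrt y * sqrt b)"
        unfolding ps_def using x b by (intro summable_sums ps_summable ee_nn ee_sum) (auto simp: mult_le_one)
      then have "(\<lambda>n. ee n * (sqrt y * sqrt b) ^ n / N) sums (ps ee (sqrt y * sqrt b) / N)"
        by (rule sums_divide)
      moreover have "(\<lambda>n. if n = 1 then K * sqrt b else 0) sums (K * sqrt b)"
        using sums_single[of 1 "\<lambda>_. K * sqrt b"] by simp
      ultimately have "(\<lambda>n. ee n * (sqrt y * sqrt b) ^ n / N - (if n = 1 then K * sqrt b else 0))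
          sums (ps ee (sqrt y * sqrt b) / N - K * sqrt b)"
        by (rule sums_diff)
      then show ?thesis unfolding tau_def eps_def Lt_def L_def using False
        by (simp add: power_mult_distrib algebra_simps)
    qed
    have sy: "(\<lambda>n. tau n y) sums Lt y" using taus x by simp
    have sv: "(\<lambda>n. (1 - t) * tau n x + t * tau n 1) sums ((1 - t) * Lt x + t * Lt 1)"
      using taus x by (intro sums_add sums_mult) auto
    have "Lt y \<le> (1 - t) * Lt x + t * Lt 1"
      unfolding sums_unique[OF sy] sums_unique[OF sv]
    proof (rule suminf_le)
      show "summable (\<lambda>n. tau n y)" using sy by (rule sums_summable)
      show "summable (\<lambda>n. (1 - t) * tau n x + t * tau n 1)" using sv by (rule sums_summable)
      fix n
      show "tau n y \<le> (1 - t) * tau n x + t * tau n 1"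
      proof (cases "n = 1")
        case True
        have "(K - eps 1) * (- sqrt y) \<le> (K - eps 1) * ((1 - t) * (- sqrt x) + t * (- sqrt 1))"
          using eps1 TPs by (intro mult_left_mono) auto
        then show ?thesis unfolding tau_def True by (simp add: algebra_simps)
      next
        case False
        have "eps n * sqrt y ^ n \<le> eps n * ((1 - t) * sqrt x ^ n + t * 1 ^ n)"
          using T3'[OF x False] eps0[of n] unfolding t_def by (intro mult_left_mono) auto
        then show ?thesis unfolding tau_def using False by (simp add: algebra_simps)
      qed
    qed
    then show ?thesis .
  qed
  have W0: "0 \<le> W" unfolding W_def by simp
  have strict: "c^2 * Pb y + s^2 * Pc y < c^2 * ((1 - t) * Pb x + t * Pb 1) + s^2 * ((1 - t) * Pc x + t * Pc 1)"
  proof (cases "c^2 > 0")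
    case True
    have "c^2 * Pb y < c^2 * ((1 - t) * Pb x + t * Pb 1)" using TPb True by simp
    moreover have "s^2 * Pc y \<le> s^2 * ((1 - t) * Pc x + t * Pc 1)" using TPc by (intro mult_left_mono) auto
    ultimately show ?thesis by linarith
  next
    case False
    then have "c^2 = 0" by (simp add: not_less)
    then have "s^2 = 1" using cs by simp
    then show ?thesis using TPb TPc \<open>c^2 = 0\<close> by simp
  qed
  have cs0: "0 \<le> 4 * c * s" using cs by simp
  have "G y < (1 - t) * G x + t * G 1"
  proof -
    have a: "4 * c * s * Lt y \<le> 4 * c * s * ((1 - t) * Lt x + t * Lt 1)" using TPL cs0 by (rule mult_left_mono)
    have b: "2 * W * (- sqrt y) \<le> 2 * W * ((1 - t) * (- sqrt x) + t * (- sqrt 1))"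
      using TPs W0 by (intro mult_left_mono) auto
    have e: "(1 - t) * G x + t * G 1 = 2 * (c^2 * ((1 - t) * Pb x + t * Pb 1) + s^2 * ((1 - t) * Pc x + t * Pc 1))
       + 4 * c * s * ((1 - t) * Lt x + t * Lt 1) + 2 * W * ((1 - t) * (- sqrt x) + t * (- sqrt 1))"
      unfolding decomp[OF x(1)] decomp[of 1, simplified] by (simp add: algebra_simps)
    have f: "G y = 2 * (c^2 * Pb y + s^2 * Pc y) + 4 * c * s * Lt y + 2 * W * (- sqrt y)"
      using decomp[of y] x by (simp add: algebra_simps)
    have s2: "2 * (c^2 * Pb y + s^2 * Pc y) < 2 * (c^2 * ((1 - t) * Pb x + t * Pb 1) + s^2 * ((1 - t) * Pc x + t * Pc 1))"
      using strict by simp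
    show ?thesis unfolding e f using add_less_le_mono[OF add_less_le_mono[OF s2 a] b] .
  qed
  also have "\<dots> \<le> (1 - t) * gam x + t * gam 1"
    using Gle[of x] Gle[of 1] x tp by (intro add_mono mult_left_mono) auto
  also have "\<dots> = (1 - y) / (1 - x) * gam x" using gam1 tp by simp
  finally have gy: "G y < (1 - y) / (1 - x) * gam x" .
  have "gam y / (1 - y) < ((1 - y) / (1 - x) * gam x) / (1 - y)"
    using gy Gy x by (intro divide_strict_right_mono) auto
  also have "((1 - y) / (1 - x) * gam x) / (1 - y) = gam x / (1 - x)" using x by simp
  finally have "gam y / (1 - y) < gam x / (1 - x)" .
  then show ?thesis using gamq[of x] gamq[of y] x
    by (simp add: divide_divide_eq_left[symmetric])
qed

end

lemma pos_near_one:
  fixes f :: "real \<Rightarrow> real"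
  assumes "continuous_on {0..1} f" "f 1 > 0"
  shows "\<exists>b. 0 < b \<and> b < 1 \<and> f b > 0"
proof -
  from assms(1) have "\<forall>e>0. \<exists>d>0. \<forall>x'\<in>{0..1}. dist x' 1 < d \<longrightarrow> dist (f x') (f 1) < e"
    unfolding continuous_on_iff by auto
  then obtain d where d: "d > 0" "\<And>x'. x' \<in> {0..1} \<Longrightarrow> dist x' 1 < d \<Longrightarrow> dist (f x') (f 1) < f 1"
    using assms(2) by blast
  define b where "b = max (1/2) (1 - d/2)"
  have b: "0 < b" "b < 1" "b \<in> {0..1}" "dist b 1 < d" using d(1) unfolding b_def by (auto simp: dist_real_def)
  have "dist (f b) (f 1) < f 1" using d(2)[OF b(3,4)] .
  then have "f b > 0" by (simp add: dist_real_def abs_less_iff)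
  then show ?thesis using b by blast
qed

context quad begin

lemma PP_cont: "continuous_on {0..1} PP"
  unfolding PP_def[abs_def] by (intro continuous_intros ps_cont nnb sb)
lemma QQ_cont: "continuous_on {0..1} QQ"
  unfolding QQ_def[abs_def] by (intro continuous_intros ps_cont nnc sc)
lemma RR_cont: "continuous_on {0..1} RR"
  unfolding RR_def[abs_def] by (intro continuous_intros ps_cont nna sa nnd sd PP_cont QQ_cont)

lemma RR0: "RR 0 = 0"
  unfolding RR_def PP_def QQ_def using ad0 bc0 by (auto simp: ps_zero)

lemma Phi0: "PP 0 + QQ 0 + z * RR 0 = 2 * fb 0"
  unfolding RR0 PP_def QQ_def using bc0 by (simp add: ps_zero)

lemma RR1: "RR 1 = ps fa 1 + ps fd 1"
proof -
  have "(QQ 1 - PP 1)^2 + 4 * ps fa 1 * ps fd 1 = (ps fa 1 + ps fd 1)^2"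
    unfolding PP1 QQ1 by algebra
  then show ?thesis unfolding RR_def using Apos Dpos by simp
qed

lemma Phi1: "PP 1 + QQ 1 + z * RR 1 = (z - 1) * (ps fa 1 + ps fd 1)"
  unfolding RR1 PP1 QQ1 by algebra

definition "Psi x = (dq fb x - (ps fa 1 + ps fb 1)) + (dq fc x - (ps fc 1 + ps fd 1))
   + ((dq fc x - (ps fc 1 + ps fd 1) - (dq fb x - (ps fa 1 + ps fb 1))) * ((QQ 1 - PP 1) + (QQ x - PP x))
      + 4 * (dq fa x * ps fd 1 + ps fa x * dq fd x)) / (RR 1 + RR x)"

lemma RR_nn: "0 \<le> x \<Longrightarrow> x \<le> 1 \<Longrightarrow> 0 \<le> RR x" unfolding RR_def
  by (intro real_sqrt_ge_zero add_nonneg_nonneg mult_nonneg_nonneg ps_nonneg nna sa nnd sd) auto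

lemma ident4:
  fixes Q P h dQ dP a d al de :: real
  shows "(Q + h * dQ - (P + h * dP))^2 + 4 * (a + h * al) * (d + h * de) - ((Q - P)^2 + 4 * a * d)
     = h * ((dQ - dP) * (Q + h * dQ - (P + h * dP) + (Q - P)) + 4 * (al * (d + h * de) + a * de))"
  by (simp add: algebra_simps power2_eq_square)

lemma Psi_cont:
  assumes "summable (\<lambda>m. real m * fa m)" "summable (\<lambda>m. real m * fb m)"
    "summable (\<lambda>m. real m * fc m)" "summable (\<lambda>m. real m * fd m)"
  shows "continuous_on {0..1} Psi"
proof -
  have "\<forall>x\<in>{0..1}. RR 1 + RR x \<noteq> 0"
  proof
    fix x :: real assume "x \<in> {0..1}"
    then have "0 \<le> RR x" using RR_nn by auto
    then show "RR 1 + RR x \<noteq> 0" using RR1 Apos Dpos by linarith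
  qed
  then show ?thesis unfolding Psi_def[abs_def]
    by (intro continuous_intros dq_cont ps_cont nna nnb nnc nnd sa sd assms PP_cont QQ_cont RR_cont) auto
qed

lemma Phi_Psi:
  assumes "summable (\<lambda>m. real m * fa m)" "summable (\<lambda>m. real m * fb m)"
    "summable (\<lambda>m. real m * fc m)" "summable (\<lambda>m. real m * fd m)"
    and x: "0 \<le> x" "x \<le> 1"
  shows "PP x + QQ x + RR x = - ((1 - x) * Psi x)"
proof -
  define DP where "DP = dq fb x - (ps fa 1 + ps fb 1)"
  define DQ where "DQ = dq fc x - (ps fc 1 + ps fd 1)"
  have hP: "PP 1 - PP x = (1 - x) * DP"
    using dq_eq[OF nnb sb assms(2) x] unfolding PP_def DP_def by (simp add: algebra_simps)
  have hQ: "QQ 1 - QQ x = (1 - x) * DQ"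
    using dq_eq[OF nnc sc assms(3) x] unfolding QQ_def DQ_def by (simp add: algebra_simps)
  have hA: "ps fa 1 - ps fa x = (1 - x) * dq fa x" using dq_eq[OF nna sa assms(1) x] .
  have hD: "ps fd 1 - ps fd x = (1 - x) * dq fd x" using dq_eq[OF nnd sd assms(4) x] .
  define V where "V = (DQ - DP) * ((QQ 1 - PP 1) + (QQ x - PP x)) + 4 * (dq fa x * ps fd 1 + ps fa x * dq fd x)"
  have sq: "(RR 1)^2 - (RR x)^2 = (1 - x) * V"
  proof -
    have "(RR 1)^2 = (QQ 1 - PP 1)^2 + 4 * ps fa 1 * ps fd 1"
      unfolding RR_def using Apos Dpos by (intro real_sqrt_pow2) (auto intro!: add_nonneg_nonneg)
    moreover have "(RR x)^2 = (QQ x - PP x)^2 + 4 * ps fa x * ps fd x"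
      unfolding RR_def using x by (intro real_sqrt_pow2 add_nonneg_nonneg mult_nonneg_nonneg ps_nonneg nna sa nnd sd) auto
    moreover have "ps fa 1 = ps fa x + (1 - x) * dq fa x" "ps fd 1 = ps fd x + (1 - x) * dq fd x"
      using hA hD by auto
    moreover have "QQ 1 = QQ x + (1 - x) * DQ" "PP 1 = PP x + (1 - x) * DP" using hP hQ by auto
    ultimately show ?thesis unfolding V_def
      by (simp only: ident4)
  qed
  have den: "RR 1 + RR x > 0" using RR_nn[OF x] RR1 Apos Dpos by simp
  have hR: "RR 1 - RR x = (1 - x) * (V / (RR 1 + RR x))"
  proof -
    have "(RR 1 - RR x) * (RR 1 + RR x) = (1 - x) * V" using sq by (simp add: power2_eq_square algebra_simps)
    then show ?thesis using den by (simp add: field_simps)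
  qed
  have "PP 1 + QQ 1 + RR 1 = 0" using Phi1[of 1] by simp
  then have "PP x + QQ x + RR x = - ((PP 1 - PP x) + (QQ 1 - QQ x) + (RR 1 - RR x))" by simp
  also have "\<dots> = - ((1 - x) * (DP + DQ + V / (RR 1 + RR x)))" unfolding hP hQ hR by (simp add: algebra_simps)
  also have "DP + DQ + V / (RR 1 + RR x) = Psi x" unfolding Psi_def DP_def DQ_def V_def by simp
  finally show ?thesis .
qed

lemma Psi1:
  "Psi 1 = 2 * (1 / (ps fa 1 + ps fd 1) *
        (ps fd 1 * ((\<Sum>m. real m * fa m) - ps fa 1 + (\<Sum>m. real m * fb m) - ps fb 1)
         + ps fa 1 * ((\<Sum>m. real m * fc m) - ps fc 1 + (\<Sum>m. real m * fd m) - ps fd 1)))"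
proof -
  have den: "ps fa 1 + ps fd 1 > 0" using Apos Dpos by simp
  have "RR 1 + RR 1 = 2 * (ps fa 1 + ps fd 1)" using RR1 by simp
  then show ?thesis unfolding Psi_def dq_one PP1 QQ1 using den
    by (simp add: field_simps)
qed

end

lemma gf1_ps: "gf1 r i z = ps (\<lambda>m. r i (1 - int m)) z"
  unfolding gf1_def ps_def ..

lemma quad_i:
  assumes A: "assumption_A c a b cc d" and i: "i \<in> {1..c}"
  shows "quad (\<lambda>m. a i (1 - int m)) (\<lambda>m. b i (1 - int m)) (\<lambda>m. cc i (1 - int m)) (\<lambda>m. d i (1 - int m))"
proof -
  have H: "(\<forall>r\<in>{a, b, cc, d}. \<forall>k\<le>1. 0 \<le> r i k) \<and>
        (\<forall>r\<in>{a, b, cc, d}. summable (\<lambda>m. r i (1 - int m))) \<and>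
        gf1 a i 1 > 0 \<and> gf1 d i 1 > 0 \<and>
        (\<forall>r\<in>{a, b, cc, d}. summable (\<lambda>m. real m * r i (1 - int m))) \<and>
        (a i 1 = 0 \<or> d i 1 = 0) \<and>
        b i 1 = cc i 1 \<and> b i 1 \<noteq> 0"
    using bspec[OF A[unfolded assumption_A_def] i] .
  note h = conjunct1[OF H] conjunct1[OF conjunct2[OF H]]
    conjunct1[OF conjunct2[OF conjunct2[OF H]]]
    conjunct1[OF conjunct2[OF conjunct2[OF conjunct2[OF H]]]]
    conjunct1[OF conjunct2[OF conjunct2[OF conjunct2[OF conjunct2[OF conjunct2[OF H]]]]]]
    conjunct1[OF conjunct2[OF conjunct2[OF conjunct2[OF conjunct2[OF conjunct2[OF conjunct2[OF H]]]]]]]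
    conjunct2[OF conjunct2[OF conjunct2[OF conjunct2[OF conjunct2[OF conjunct2[OF conjunct2[OF H]]]]]]]
  have nn: "0 \<le> r i (1 - int m)" if "r \<in> {a, b, cc, d}" for r m using h(1) that by auto
  show ?thesis
  proof
    show "0 \<le> a i (1 - int m)" "0 \<le> b i (1 - int m)" "0 \<le> cc i (1 - int m)" "0 \<le> d i (1 - int m)" for m
      using nn by auto
    show "summable (\<lambda>m. a i (1 - int m))" "summable (\<lambda>m. b i (1 - int m))"
      "summable (\<lambda>m. cc i (1 - int m))" "summable (\<lambda>m. d i (1 - int m))" using h(2) by auto
    show "0 < ps (\<lambda>m. a i (1 - int m)) 1" "0 < ps (\<lambda>m. d i (1 - int m)) 1" using h(3,4) by (auto simp: gf1_ps)
    show "a i (1 - int 0) = 0 \<or> d i (1 - int 0) = 0" using h(5) by simp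
    show "b i (1 - int 0) = cc i (1 - int 0)" using h(6) by simp
    have "0 \<le> b i 1" using nn[of b 0] by simp
    then show "0 < b i (1 - int 0)" using h(7) by simp
  qed
qed

theorem corollary2:
  fixes c :: nat and a b cc d :: "nat \<Rightarrow> int \<Rightarrow> real"
  assumes "c \<ge> 1"
    and "assumption_A c a b cc d"
    and "ergodicity_E c a b cc d"
  shows "\<forall>x :: nat \<Rightarrow> real. (\<forall>i\<in>{1..c}. x i \<in> {-1, 1}) \<longrightarrow>
           (\<exists>!\<beta>. \<beta> \<in> {0<..<1} \<and> eq_Ex c a b cc d x \<beta>)"
proof (intro allI impI)
  fix x :: "nat \<Rightarrow> real"
  assume hx: "\<forall>i\<in>{1..c}. x i \<in> {-1, 1}"
  define fa where "fa i = (\<lambda>m. a i (1 - int m))" for i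
  define fb where "fb i = (\<lambda>m. b i (1 - int m))" for i
  define fc where "fc i = (\<lambda>m. cc i (1 - int m))" for i
  define fd where "fd i = (\<lambda>m. d i (1 - int m))" for i
  have Q: "quad (fa i) (fb i) (fc i) (fd i)" if "i \<in> {1..c}" for i
    unfolding fa_def fb_def fc_def fd_def by (rule quad_i[OF assms(2) that])
  define T where "T i z = quad.PP (fa i) (fb i) z + quad.QQ (fc i) (fd i) z + x i * quad.RR (fa i) (fb i) (fc i) (fd i) z" for i z
  define Phi where "Phi z = (\<Sum>i=1..c. T i z)" for z
  have I: "finite {1..c}" "{1..c} \<noteq> {}" using assms(1) by auto
  have eqv: "eq_Ex c a b cc d x z \<longleftrightarrow> Phi z = 0" for z
  proof -
    have "x i * R1 a b cc d i z + gf1 b i z + gf1 cc i z - z * (gf1 a i 1 + gf1 b i 1 + gf1 cc i 1 + gf1 d i 1) = T i z"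
      if i: "i \<in> {1..c}" for i
    proof -
      note P = quad.PP_def[OF Q[OF i]] and QQ = quad.QQ_def[OF Q[OF i]] and RR = quad.RR_def[OF Q[OF i]]
      have F: "F1 a b cc d i z = quad.QQ (fc i) (fd i) z - quad.PP (fa i) (fb i) z"
        unfolding QQ P unfolding F1_def gf1_ps fa_def fb_def fc_def fd_def by (simp add: algebra_simps)
      have R: "R1 a b cc d i z = quad.RR (fa i) (fb i) (fc i) (fd i) z"
        unfolding R1_def F RR by (simp add: gf1_ps fa_def fd_def)
      have "T i z = (ps (fb i) z - z * (ps (fa i) 1 + ps (fb i) 1)) + (ps (fc i) z - z * (ps (fc i) 1 + ps (fd i) 1))
          + x i * quad.RR (fa i) (fb i) (fc i) (fd i) z"
        unfolding T_def P QQ ..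
      then show ?thesis unfolding R
        by (simp add: gf1_ps fa_def fb_def fc_def fd_def algebra_simps)
    qed
    then have "(\<Sum>i=1..c. x i * R1 a b cc d i z + gf1 b i z + gf1 cc i z - z * (gf1 a i 1 + gf1 b i 1 + gf1 cc i 1 + gf1 d i 1)) = Phi z"
      unfolding Phi_def by (intro sum.cong) auto
    then show ?thesis unfolding eq_Ex_def by auto
  qed
  have mono: "Phi z2 / (sqrt z2 * (1 - z2)) < Phi z1 / (sqrt z1 * (1 - z1))" if z: "0 < z1" "z1 < z2" "z2 < 1" for z1 z2
  proof -
    have "(\<Sum>i=1..c. T i z2 / (sqrt z2 * (1 - z2))) < (\<Sum>i=1..c. T i z1 / (sqrt z1 * (1 - z1)))"
    proof (rule sum_strict_mono[OF I])
      fix i assume i: "i \<in> {1..c}"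
      then have "x i = -1 \<or> x i = 1" using hx by auto
      then show "T i z2 / (sqrt z2 * (1 - z2)) < T i z1 / (sqrt z1 * (1 - z1))"
      proof
        assume "x i = -1"
        then show ?thesis unfolding T_def using quad.KEYm[OF Q[OF i] z] by simp
      next
        assume "x i = 1"
        then show ?thesis unfolding T_def using quad.KEYp[OF Q[OF i] z] by simp
      qed
    qed
    then show ?thesis unfolding Phi_def by (simp add: sum_divide_distrib)
  qed
  have uniq: "z1 = z2" if "z1 \<in> {0<..<1}" "Phi z1 = 0" "z2 \<in> {0<..<1}" "Phi z2 = 0" for z1 z2
  proof (rule ccontr)
    assume "z1 \<noteq> z2"
    then have "z1 < z2 \<or> z2 < z1" by auto
    then show False
    proof
      assume "z1 < z2" then show False using mono[of z1 z2] that by simp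
    next
      assume "z2 < z1" then show False using mono[of z2 z1] that by simp
    qed
  qed
  have Tcont: "continuous_on {0..1} (T i)" if i: "i \<in> {1..c}" for i
    unfolding T_def[abs_def] using quad.PP_cont[OF Q[OF i]] quad.QQ_cont[OF Q[OF i]] quad.RR_cont[OF Q[OF i]]
    by (intro continuous_intros) auto
  have cont: "continuous_on {0..1} Phi"
  proof -
    have "continuous_on {0..1} (\<lambda>z. \<Sum>i=1..c. T i z)" using Tcont by (intro continuous_on_sum) auto
    then show ?thesis unfolding Phi_def[abs_def] .
  qed
  have Phi0: "Phi 0 > 0"
  proof -
    have "Phi 0 = (\<Sum>i=1..c. 2 * fb i 0)" unfolding Phi_def T_def
      by (intro sum.cong refl quad.Phi0[OF Q]) auto
    also have "\<dots> > 0" using I quad.b0[OF Q] by (intro sum_pos) auto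
    finally show ?thesis .
  qed
  have ex: "\<exists>z. z \<in> {0<..<1} \<and> Phi z = 0"
  proof (cases "\<exists>j\<in>{1..c}. x j = -1")
    case True
    then obtain j where j: "j \<in> {1..c}" "x j = -1" by auto
    have Phi1: "Phi 1 < 0"
    proof -
      have Ti: "T i 1 = (x i - 1) * (ps (fa i) 1 + ps (fd i) 1)" if "i \<in> {1..c}" for i
        unfolding T_def using quad.Phi1[OF Q[OF that]] by simp
      have le: "T i 1 \<le> 0" if "i \<in> {1..c}" for i
      proof -
        have "x i = -1 \<or> x i = 1" using hx that by auto
        then have "x i \<le> 1" by auto
        moreover have "0 \<le> ps (fa i) 1 + ps (fd i) 1" using quad.Apos[OF Q[OF that]] quad.Dpos[OF Q[OF that]] by simp
        ultimately show ?thesis unfolding Ti[OF that] by (simp add: mult_nonpos_nonneg)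
      qed
      have lt: "T j 1 < 0" unfolding Ti[OF j(1)] j(2)
        using quad.Apos[OF Q[OF j(1)]] quad.Dpos[OF Q[OF j(1)]] by simp
      have "Phi 1 = T j 1 + (\<Sum>i\<in>{1..c} - {j}. T i 1)" unfolding Phi_def
        using sum.remove[OF I(1) j(1)] by simp
      also have "(\<Sum>i\<in>{1..c} - {j}. T i 1) \<le> 0" using le by (intro sum_nonpos) auto
      finally show ?thesis using lt by linarith
    qed
    obtain z where z: "0 \<le> z" "z \<le> 1" "Phi z = 0"
      using IVT2'[of Phi 1 0 0] Phi0 Phi1 cont by auto
    have "z \<noteq> 0" using z Phi0 by auto
    moreover have "z \<noteq> 1" using z Phi1 by auto
    ultimately have "z \<in> {0<..<1}" using z by auto
    then show ?thesis using z by blast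
  next
    case False
    then have x1: "x i = 1" if "i \<in> {1..c}" for i using hx that by auto
    define Ps where "Ps z = (\<Sum>i=1..c. quad.Psi (fa i) (fb i) (fc i) (fd i) z)" for z
    have ds: "summable (\<lambda>m. real m * fa i m)" "summable (\<lambda>m. real m * fb i m)"
       "summable (\<lambda>m. real m * fc i m)" "summable (\<lambda>m. real m * fd i m)" if "i \<in> {1..c}" for i
      using assms(2) that unfolding assumption_A_def fa_def fb_def fc_def fd_def by auto
    have Pscont: "continuous_on {0..1} Ps"
      unfolding Ps_def by (intro continuous_on_sum quad.Psi_cont[OF Q] ds) auto
    have Ps1: "Ps 1 > 0"
    proof -
      have "Ps 1 = (\<Sum>i=1..c. 2 * (1 / (gf1 a i 1 + gf1 d i 1) *
        (gf1 d i 1 * (gf1_deriv_at1 a i - gf1 a i 1 + gf1_deriv_at1 b i - gf1 b i 1)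
         + gf1 a i 1 * (gf1_deriv_at1 cc i - gf1 cc i 1 + gf1_deriv_at1 d i - gf1 d i 1))))"
        unfolding Ps_def
      proof (rule sum.cong[OF refl])
        fix i assume i: "i \<in> {1..c}"
        show "quad.Psi (fa i) (fb i) (fc i) (fd i) 1 = 2 * (1 / (gf1 a i 1 + gf1 d i 1) *
        (gf1 d i 1 * (gf1_deriv_at1 a i - gf1 a i 1 + gf1_deriv_at1 b i - gf1 b i 1)
         + gf1 a i 1 * (gf1_deriv_at1 cc i - gf1 cc i 1 + gf1_deriv_at1 d i - gf1 d i 1)))"
          unfolding quad.Psi1[OF Q[OF i]] unfolding gf1_ps gf1_deriv_at1_def fa_def fb_def fc_def fd_def ..
      qed
      also have "\<dots> > 0" using assms(3) unfolding ergodicity_E_def sum_distrib_left[symmetric] by simp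
      finally show ?thesis .
    qed
    obtain z0 where z0: "0 < z0" "z0 < 1" "Ps z0 > 0" using pos_near_one[OF Pscont Ps1] by auto
    have "Phi z0 = - ((1 - z0) * Ps z0)"
    proof -
      have "Phi z0 = (\<Sum>i=1..c. - ((1 - z0) * quad.Psi (fa i) (fb i) (fc i) (fd i) z0))"
        unfolding Phi_def
      proof (rule sum.cong[OF refl])
        fix i assume i: "i \<in> {1..c}"
        show "T i z0 = - ((1 - z0) * quad.Psi (fa i) (fb i) (fc i) (fd i) z0)"
          unfolding T_def x1[OF i] using quad.Phi_Psi[OF Q[OF i] ds[OF i]] z0 by simp
      qed
      then show ?thesis unfolding Ps_def by (simp add: sum_distrib_left sum_negf)
    qed
    then have Phiz0: "Phi z0 < 0" using z0 by simp
    have cont0: "continuous_on {0..z0} Phi" using z0 by (intro continuous_on_subset[OF cont]) auto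
    obtain z where z: "0 \<le> z" "z \<le> z0" "Phi z = 0"
      using IVT2'[of Phi z0 0 0] Phi0 Phiz0 cont0 z0 by auto
    have "z \<noteq> 0" using z Phi0 by auto
    then have "z \<in> {0<..<1}" using z z0 by auto
    then show ?thesis using z by blast
  qed
  show "\<exists>!\<beta>. \<beta> \<in> {0<..<1} \<and> eq_Ex c a b cc d x \<beta>"
    unfolding eqv using ex uniq by blast
qed

end
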